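(* Let $\|\cdot\|_{F_n}$ ($n\ge1$) and $\|\cdot\|_F$ be $F$-norms on $\mathbb{R}^{d+1}$. Then $\|\mathbf{x}\|_{F_n}\to\|\mathbf{x}\|_F$ for every $\mathbf{x}\in\mathbb{R}^{d+1}$ if and only if $d_{H,\|\cdot\|}(S^+_{\|\cdot\|_{F_n}},S^+_{\|\cdot\|_F})\to0$, where $\|\cdot\|$ is any norm on $\mathbb{R}^{d+1}$.
   Context: Condition $(\mathcal{H})$ on $\mathbf{X}=(X_1,\dots,X_d)$: each $X_i$ is a.s. nonnegative with $0<E(X_i)<\infty$. For such $\mathbf{X}$ with distribution function $F$, $\|\mathbf{x}\|_F=E(\max(|x_0|,|x_1|X_1,\dots,|x_d|X_d))$; an $F$-norm is a norm on $\mathbb{R}^{d+1}$ of this form. For an $F$-norm, $S^+_{\|\cdot\|_F}:=\{\mathbf{x}\in[0,\infty)^{d+1}:\|\mathbf{x}\|_F=1\}$. For a norm $\|\cdot\|$ on $\mathbb{R}^{d+1}$ and sets $A,B\subset\mathbb{R}^{d+1}$, $d_{H,\|\cdot\|}(A,B)=\max\{\sup_{\mathbf{y}\in B}\inf_{\mathbf{x}\in A}\|\mathbf{x}-\mathbf{y}\|,\sup_{\mathbf{x}\in A}\inf_{\mathbf{y}\in B}\|\mathbf{x}-\mathbf{y}\|\}$. *)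

theory Defs
  imports "HOL-Probability.Probability"
begin

text \<open>Points of R^{d+1} are pairs (x0, x') with x0 real and x' in R^d (type real^'d).\<close>

definition cond_H :: "(real ^ 'd) measure \<Rightarrow> bool" where
  "cond_H F \<longleftrightarrow> prob_space F \<and> sets F = sets borel \<and>
     (\<forall>i. AE y in F. 0 \<le> y $ i) \<and>
     (\<forall>i. integrable F (\<lambda>y. y $ i) \<and> 0 < (\<integral>y. y $ i \<partial>F))"

definition F_norm_of :: "(real ^ 'd) measure \<Rightarrow> real \<times> (real ^ 'd) \<Rightarrow> real" where
  "F_norm_of F x = (\<integral>y. Max (insert \<bar>fst x\<bar> (range (\<lambda>i. \<bar>snd x $ i\<bar> * y $ i))) \<partial>F)"

definition is_F_norm :: "(real \<times> (real ^ 'd) \<Rightarrow> real) \<Rightarrow> bool" where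
  "is_F_norm N \<longleftrightarrow> (\<exists>F. cond_H F \<and> N = F_norm_of F)"

definition S_plus :: "(real \<times> (real ^ 'd) \<Rightarrow> real) \<Rightarrow> (real \<times> (real ^ 'd)) set" where
  "S_plus N = {x. 0 \<le> fst x \<and> (\<forall>i. 0 \<le> snd x $ i) \<and> N x = 1}"

definition is_norm_fun :: "('a::real_vector \<Rightarrow> real) \<Rightarrow> bool" where
  "is_norm_fun nrm \<longleftrightarrow> (\<forall>x. nrm x = 0 \<longleftrightarrow> x = 0) \<and>
     (\<forall>x y. nrm (x + y) \<le> nrm x + nrm y) \<and>
     (\<forall>c x. nrm (c *\<^sub>R x) = \<bar>c\<bar> * nrm x)"

definition hausdorff_dist_norm ::
  "('a \<Rightarrow> real) \<Rightarrow> 'a::real_vector set \<Rightarrow> 'a set \<Rightarrow> real" where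
  "hausdorff_dist_norm nrm A B =
     max (SUP y\<in>B. INF x\<in>A. nrm (x - y)) (SUP x\<in>A. INF y\<in>B. nrm (x - y))"

end

theory Submission
  imports Defs
begin

definition avec :: "real \<times> (real ^ 'd) \<Rightarrow> real \<times> (real ^ 'd)" where
  "avec x = (\<bar>fst x\<bar>, \<chi> i. \<bar>snd x $ i\<bar>)"

definition fnl :: "(real \<times> (real ^ 'd) \<Rightarrow> real) \<Rightarrow> ('d \<Rightarrow> real) \<Rightarrow> bool" where
  "fnl N m \<longleftrightarrow> (\<forall>i. 0 < m i) \<and> (\<forall>x y. N (x + y) \<le> N x + N y) \<and>
     (\<forall>c x. N (c *\<^sub>R x) = \<bar>c\<bar> * N x) \<and> (\<forall>x. N (avec x) = N x) \<and>
     (\<forall>x. \<bar>fst x\<bar> \<le> N x) \<and> (\<forall>x i. \<bar>snd x $ i\<bar> * m i \<le> N x) \<and>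
     (\<forall>x. N x \<le> \<bar>fst x\<bar> + (\<Sum>i\<in>UNIV. \<bar>snd x $ i\<bar> * m i))"

lemma Max_ins_le:
  fixes h :: "'d::finite \<Rightarrow> real"
  shows "Max (insert a (range h)) \<le> b \<longleftrightarrow> a \<le> b \<and> (\<forall>i. h i \<le> b)"
  by (simp add: Max_le_iff)

lemma Max_ins_ge1:
  fixes h :: "'d::finite \<Rightarrow> real"
  shows "a \<le> Max (insert a (range h))"
  by simp

lemma Max_ins_ge2:
  fixes h :: "'d::finite \<Rightarrow> real"
  shows "h i \<le> Max (insert a (range h))"
  by (rule Max_ge) auto

lemma Max_ins_eq:
  fixes h :: "'d::finite \<Rightarrow> real"
  shows "Max (insert a (range h)) = max a (Max (range h))"
  by (simp add: Max_insert)

lemma Max_ins_scale: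
  fixes h :: "'d::finite \<Rightarrow> real"
  assumes "0 \<le> c"
  shows "Max (insert (c * a) (range (\<lambda>i. c * h i))) = c * Max (insert a (range h))"
proof -
  have "mono ((*) c)" using assms by (simp add: mono_def mult_left_mono)
  then have "c * Max (insert a (range h)) = Max ((*) c ` insert a (range h))"
    by (rule mono_Max_commute) auto
  also have "(*) c ` insert a (range h) = insert (c * a) (range (\<lambda>i. c * h i))"
    by auto
  finally show ?thesis by simp
qed

lemma F_norm_fnl:
  fixes F :: "(real ^ 'd) measure"
  assumes H: "cond_H F"
  shows "fnl (F_norm_of F) (\<lambda>i. \<integral>y. y $ i \<partial>F)"
proof -
  interpret prob_space F using H by (simp add: cond_H_def)
  define m where "m i = (\<integral>y. y $ i \<partial>F)" for i
  have intc: "\<And>i. integrable F (\<lambda>y. y $ i)" and mpos: "\<And>i. 0 < m i"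
    using H by (auto simp: cond_H_def m_def)
  have AEpos: "AE y in F. \<forall>i. 0 \<le> y $ i"
    using H by (simp add: cond_H_def AE_all_countable)
  define g where "g x y = Max (insert \<bar>fst x\<bar> (range (\<lambda>i. \<bar>snd x $ i\<bar> * y $ i)))"
    for x :: "real \<times> (real ^ 'd)" and y :: "real ^ 'd"
  have Fg: "F_norm_of F x = integral\<^sup>L F (g x)" for x
    unfolding F_norm_of_def g_def by (rule refl)
  have meas_c: "(\<lambda>y. y $ i) \<in> borel_measurable F" for i
    using intc by auto
  have meas: "g x \<in> borel_measurable F" for x
  proof -
    have "(\<lambda>y. Max ((\<lambda>i. \<bar>snd x $ i\<bar> * y $ i) ` UNIV)) \<in> borel_measurable F"
      by (rule borel_measurable_Max) (auto intro!: borel_measurable_times meas_c)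
    then show ?thesis
      unfolding g_def Max_ins_eq by measurable
  qed
  define B where "B x y = \<bar>fst x\<bar> + (\<Sum>i\<in>UNIV. \<bar>snd x $ i\<bar> * y $ i)"
    for x :: "real \<times> (real ^ 'd)" and y :: "real ^ 'd"
  have intS: "integrable F (\<lambda>y. \<Sum>i\<in>UNIV. \<bar>snd x $ i\<bar> * y $ i)" for x
    by (rule Bochner_Integration.integrable_sum) (intro integrable_mult_right intc)
  have intB: "integrable F (B x)" for x
    unfolding B_def by (intro Bochner_Integration.integrable_add integrable_const intS)
  have intBv: "integral\<^sup>L F (B x) = \<bar>fst x\<bar> + (\<Sum>i\<in>UNIV. \<bar>snd x $ i\<bar> * m i)" for x
  proof -
    have "integral\<^sup>L F (\<lambda>y. \<Sum>i\<in>UNIV. \<bar>snd x $ i\<bar> * y $ i) = (\<Sum>i\<in>UNIV. \<bar>snd x $ i\<bar> * m i)"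
      by (subst Bochner_Integration.integral_sum) (auto intro!: integrable_mult_right intc simp: m_def)
    then show ?thesis unfolding B_def
      by (subst Bochner_Integration.integral_add) (auto intro!: intS simp: prob_space)
  qed
  have gB: "AE y in F. g x y \<le> B x y" for x
    using AEpos
  proof eventually_elim
    case (elim y)
    have "\<bar>snd x $ i\<bar> * y $ i \<le> B x y" for i
    proof -
      have "\<bar>snd x $ i\<bar> * y $ i \<le> (\<Sum>j\<in>UNIV. \<bar>snd x $ j\<bar> * y $ j)"
        by (rule member_le_sum) (use elim in auto)
      then show ?thesis unfolding B_def by simp
    qed
    moreover have "\<bar>fst x\<bar> \<le> B x y" unfolding B_def
      using elim by (auto intro!: sum_nonneg)
    ultimately show ?case unfolding g_def Max_ins_le by auto
  qed
  have g0: "\<bar>fst x\<bar> \<le> g x y" for x y unfolding g_def by (rule Max_ins_ge1)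
  have g1: "\<bar>snd x $ i\<bar> * y $ i \<le> g x y" for x y i unfolding g_def by (rule Max_ins_ge2)
  have intg: "integrable F (g x)" for x
  proof (rule Bochner_Integration.integrable_bound[OF intB[of x] meas])
    show "AE y in F. norm (g x y) \<le> norm (B x y)"
      using gB[of x] AEpos
    proof eventually_elim
      case (elim y)
      have "0 \<le> g x y" using g0[of x y] by linarith
      then show ?case using elim by auto
    qed
  qed
  have lo0: "\<bar>fst x\<bar> \<le> F_norm_of F x" for x
  proof -
    have "(\<integral>y. \<bar>fst x\<bar> \<partial>F) \<le> integral\<^sup>L F (g x)"
      by (rule integral_mono[OF _ intg]) (auto simp: g0)
    then show ?thesis by (simp add: Fg prob_space)
  qed
  have lo1: "\<bar>snd x $ i\<bar> * m i \<le> F_norm_of F x" for x i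
  proof -
    have "(\<integral>y. \<bar>snd x $ i\<bar> * y $ i \<partial>F) \<le> integral\<^sup>L F (g x)"
      by (rule integral_mono[OF _ intg]) (auto simp: g1 intc)
    then show ?thesis by (simp add: Fg m_def)
  qed
  have up: "F_norm_of F x \<le> \<bar>fst x\<bar> + (\<Sum>i\<in>UNIV. \<bar>snd x $ i\<bar> * m i)" for x
    unfolding Fg intBv[symmetric] by (rule integral_mono_AE[OF intg intB gB])
  have tri: "F_norm_of F (x + z) \<le> F_norm_of F x + F_norm_of F z" for x z
  proof -
    have "AE y in F. g (x + z) y \<le> g x y + g z y"
      using AEpos
    proof eventually_elim
      case (elim y)
      have "\<bar>fst (x + z)\<bar> \<le> g x y + g z y"
        using g0[of x y] g0[of z y] by simp
      moreover have "\<bar>snd (x + z) $ i\<bar> * y $ i \<le> g x y + g z y" for i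
      proof -
        have "\<bar>snd (x + z) $ i\<bar> * y $ i \<le> (\<bar>snd x $ i\<bar> + \<bar>snd z $ i\<bar>) * y $ i"
          using elim by (intro mult_right_mono) auto
        also have "\<dots> = \<bar>snd x $ i\<bar> * y $ i + \<bar>snd z $ i\<bar> * y $ i" by (simp add: algebra_simps)
        also have "\<dots> \<le> g x y + g z y" using g1[of x i y] g1[of z i y] by simp
        finally show ?thesis .
      qed
      ultimately show ?case by (subst g_def) (simp only: Max_ins_le, auto)
    qed
    then have "integral\<^sup>L F (g (x + z)) \<le> integral\<^sup>L F (\<lambda>y. g x y + g z y)"
      by (intro integral_mono_AE intg Bochner_Integration.integrable_add)
    then show ?thesis by (simp add: Fg intg)
  qed
  have hom: "F_norm_of F (c *\<^sub>R x) = \<bar>c\<bar> * F_norm_of F x" for c x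
  proof -
    have "g (c *\<^sub>R x) y = \<bar>c\<bar> * g x y" for y
    proof -
      have "g (c *\<^sub>R x) y = Max (insert (\<bar>c\<bar> * \<bar>fst x\<bar>) (range (\<lambda>i. \<bar>c\<bar> * (\<bar>snd x $ i\<bar> * y $ i))))"
        by (simp add: g_def abs_mult mult.assoc)
      also have "\<dots> = \<bar>c\<bar> * g x y" unfolding g_def by (rule Max_ins_scale) simp
      finally show ?thesis .
    qed
    then have "g (c *\<^sub>R x) = (\<lambda>y. \<bar>c\<bar> * g x y)" by auto
    then show ?thesis by (simp add: Fg)
  qed
  have av: "F_norm_of F (avec x) = F_norm_of F x" for x
    by (simp add: F_norm_of_def avec_def)
  show ?thesis
    unfolding fnl_def using mpos tri hom av lo0 lo1 up by (simp add: m_def)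
qed


type_synonym ('d) V = "real \<times> (real ^ ('d::finite))"

lemma fnl_nonneg: "fnl N m \<Longrightarrow> 0 \<le> N x"
  unfolding fnl_def by (meson abs_ge_zero order_trans)

lemma fnl_minus: "fnl N m \<Longrightarrow> N (- x) = N x"
  unfolding fnl_def by (metis abs_minus_cancel abs_one mult_1 scaleR_minus1_left)

lemma fnl_diff: assumes "fnl N m" shows "\<bar>N x - N y\<bar> \<le> N (x - y)"
proof -
  have t: "N (a + b) \<le> N a + N b" for a b using assms unfolding fnl_def by blast
  have "N x \<le> N (x - y) + N y" using t[of "x - y" y] by simp
  moreover have "N y \<le> N (y - x) + N x" using t[of "y - x" x] by simp
  moreover have "N (y - x) = N (x - y)" using fnl_minus[OF assms, of "x - y"] by simp
  ultimately show ?thesis by linarith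
qed

lemma fnl_up: assumes "fnl N m" shows "N x \<le> (1 + (\<Sum>i\<in>UNIV. m i)) * norm x"
proof -
  have mp: "0 < m i" for i using assms unfolding fnl_def by blast
  have "N x \<le> \<bar>fst x\<bar> + (\<Sum>i\<in>UNIV. \<bar>snd x $ i\<bar> * m i)" using assms unfolding fnl_def by blast
  also have "\<dots> \<le> norm x + (\<Sum>i\<in>UNIV. norm x * m i)"
  proof (intro add_mono sum_mono mult_right_mono)
    show "\<bar>fst x\<bar> \<le> norm x" using norm_fst_le[of "fst x" "snd x"] by simp
    fix i
    show "\<bar>snd x $ i\<bar> \<le> norm x"
      using component_le_norm_cart[of "snd x" i] norm_snd_le[of "snd x" "fst x"] by simp
    show "0 \<le> m i" using mp[of i] by simp
  qed
  also have "\<dots> = (1 + (\<Sum>i\<in>UNIV. m i)) * norm x" by (simp add: sum_distrib_left algebra_simps)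
  finally show ?thesis .
qed

lemma fnl_bdd: assumes "fnl N m" shows "norm x \<le> N x * (1 + (\<Sum>i\<in>UNIV. 1 / m i))"
proof -
  have mp: "0 < m i" for i using assms unfolding fnl_def by blast
  have lo: "\<bar>snd x $ i\<bar> * m i \<le> N x" for i using assms unfolding fnl_def by blast
  have "norm x \<le> \<bar>fst x\<bar> + norm (snd x)"
    using norm_Pair_le[of "fst x" "snd x"] by simp
  also have "\<dots> \<le> N x + (\<Sum>i\<in>UNIV. N x * (1 / m i))"
  proof (intro add_mono)
    show "\<bar>fst x\<bar> \<le> N x" using assms unfolding fnl_def by blast
    have "norm (snd x) \<le> (\<Sum>i\<in>UNIV. \<bar>snd x $ i\<bar>)" by (rule norm_le_l1_cart)
    also have "\<dots> \<le> (\<Sum>i\<in>UNIV. N x * (1 / m i))"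
    proof (rule sum_mono)
      fix i
      show "\<bar>snd x $ i\<bar> \<le> N x * (1 / m i)"
        using lo[of i] mp[of i] by (simp add: field_simps)
    qed
    finally show "norm (snd x) \<le> (\<Sum>i\<in>UNIV. N x * (1 / m i))" .
  qed
  also have "\<dots> = N x * (1 + (\<Sum>i\<in>UNIV. 1 / m i))" by (simp add: sum_distrib_left algebra_simps)
  finally show ?thesis .
qed

lemma fnl_e0: assumes "fnl N m" shows "N (1, 0) = 1"
proof -
  have "1 \<le> N (1, 0)" using assms unfolding fnl_def by (metis abs_one fst_conv)
  moreover have "N (1, 0) \<le> 1" using assms unfolding fnl_def
    by (metis (no_types, lifting) abs_zero abs_one add.right_neutral fst_conv mult_zero_left snd_conv sum.neutral zero_index)
  ultimately show ?thesis by simp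
qed

lemma fnl_ax: assumes "fnl N m" shows "N (0, axis i c) = \<bar>c\<bar> * m i"
proof -
  have "\<bar>c\<bar> * m i \<le> N (0, axis i c)" using assms unfolding fnl_def
    by (metis axis_nth snd_conv)
  moreover have "N (0, axis i c) \<le> \<bar>c\<bar> * m i"
  proof -
    have "N (0, axis i c) \<le> \<bar>fst (0::real, axis i c)\<bar> + (\<Sum>j\<in>UNIV. \<bar>snd (0::real, axis i c) $ j\<bar> * m j)"
      using assms unfolding fnl_def by blast
    also have "\<dots> = (\<Sum>j\<in>UNIV. if j = i then \<bar>c\<bar> * m i else 0)"
      by (simp only: fst_conv snd_conv abs_zero add_0_left, rule sum.cong) (auto simp: axis_def)
    also have "\<dots> = \<bar>c\<bar> * m i" by simp
    finally show ?thesis .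
  qed
  ultimately show ?thesis by simp
qed

lemma fnl_S_plus_ne: assumes "fnl N m" shows "(1, 0) \<in> S_plus N"
  using fnl_e0[OF assms] by (simp add: S_plus_def)

lemma fnl_S_plus_bdd: assumes "fnl N m" "x \<in> S_plus N"
  shows "norm x \<le> 1 + (\<Sum>i\<in>UNIV. 1 / m i)"
  using fnl_bdd[OF assms(1), of x] assms(2) by (simp add: S_plus_def)

lemma nrm_basic:
  assumes "is_norm_fun nrm"
  shows "nrm 0 = 0" "nrm (x + y) \<le> nrm x + nrm y" "nrm (c *\<^sub>R x) = \<bar>c\<bar> * nrm x"
    "nrm (- x) = nrm x" "nrm (x - y) = nrm (y - x)" "0 \<le> nrm x"
proof -
  have h: "nrm (c *\<^sub>R x) = \<bar>c\<bar> * nrm x" for c x using assms unfolding is_norm_fun_def by blast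
  have t: "nrm (x + y) \<le> nrm x + nrm y" for x y using assms unfolding is_norm_fun_def by blast
  show "nrm 0 = 0" using assms unfolding is_norm_fun_def by blast
  show "nrm (x + y) \<le> nrm x + nrm y" by (rule t)
  show "nrm (c *\<^sub>R x) = \<bar>c\<bar> * nrm x" by (rule h)
  show m: "nrm (- x) = nrm x" using h[of "-1" x] by simp
  show "nrm (x - y) = nrm (y - x)" using h[of "-1" "x - y"] by simp
  have "nrm 0 \<le> nrm x + nrm (- x)" using t[of x "-x"] by simp
  moreover have "nrm 0 = 0" using assms unfolding is_norm_fun_def by blast
  ultimately show "0 \<le> nrm x" using m by simp
qed

lemma nrm_sum:
  assumes "is_norm_fun nrm" "finite S"
  shows "nrm (sum f S) \<le> (\<Sum>i\<in>S. nrm (f i))"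
  using assms(2)
proof (induction S rule: finite_induct)
  case empty then show ?case using nrm_basic[OF assms(1)] by simp
next
  case (insert a S)
  then show ?case using nrm_basic(2)[OF assms(1), of "f a" "sum f S"] by simp
qed

lemma nrm_up:
  fixes nrm :: "('d::finite) V \<Rightarrow> real"
  assumes "is_norm_fun nrm"
  obtains C where "0 < C" "\<And>x. nrm x \<le> C * norm x"
proof -
  define C where "C = 1 + nrm (1, 0) + (\<Sum>i\<in>UNIV. nrm (0, axis i 1))"
  have nn: "0 \<le> nrm z" for z using nrm_basic[OF assms] by simp
  have "0 \<le> (\<Sum>i\<in>UNIV. nrm (0::real, axis i (1::real)))" by (intro sum_nonneg nn)
  then have Cp: "0 < C" unfolding C_def using nn[of "(1,0)"] by linarith
  have "nrm x \<le> C * norm x" for x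
  proof -
    have dec: "x = fst x *\<^sub>R (1, 0) + (\<Sum>i\<in>UNIV. (snd x $ i) *\<^sub>R (0, axis i 1))"
    proof -
      have "(\<Sum>i\<in>UNIV. (snd x $ i) *\<^sub>R ((0::real), axis i (1::real))) = (0, \<Sum>i\<in>UNIV. (snd x $ i) *s axis i 1)"
        by (simp add: prod_eq_iff fst_sum snd_sum scalar_mult_eq_scaleR)
      also have "\<dots> = (0, snd x)" by (simp add: basis_expansion)
      finally show ?thesis by (simp add: prod_eq_iff)
    qed
    have "nrm x \<le> nrm (fst x *\<^sub>R (1, 0)) + nrm (\<Sum>i\<in>UNIV. (snd x $ i) *\<^sub>R (0, axis i 1))"
      by (subst dec) (rule nrm_basic(2)[OF assms])
    also have "\<dots> \<le> \<bar>fst x\<bar> * nrm (1, 0) + (\<Sum>i\<in>UNIV. \<bar>snd x $ i\<bar> * nrm (0, axis i 1))"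
    proof (rule add_mono)
      show "nrm (fst x *\<^sub>R (1, 0)) \<le> \<bar>fst x\<bar> * nrm (1, 0)"
        by (simp only: nrm_basic(3)[OF assms])
      have "nrm (\<Sum>i\<in>UNIV. (snd x $ i) *\<^sub>R ((0::real), axis i (1::real))) \<le> (\<Sum>i\<in>UNIV. nrm ((snd x $ i) *\<^sub>R ((0::real), axis i (1::real))))"
        by (rule nrm_sum[OF assms]) simp
      also have "\<dots> = (\<Sum>i\<in>UNIV. \<bar>snd x $ i\<bar> * nrm (0, axis i 1))"
        by (simp only: nrm_basic(3)[OF assms])
      finally show "nrm (\<Sum>i\<in>UNIV. (snd x $ i) *\<^sub>R ((0::real), axis i (1::real))) \<le> (\<Sum>i\<in>UNIV. \<bar>snd x $ i\<bar> * nrm (0, axis i 1))" .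
    qed
    also have "\<dots> \<le> norm x * nrm (1, 0) + (\<Sum>i\<in>UNIV. norm x * nrm (0, axis i 1))"
    proof (intro add_mono sum_mono mult_right_mono nn)
      show "\<bar>fst x\<bar> \<le> norm x" using norm_fst_le[of "fst x" "snd x"] by simp
      fix i
      show "\<bar>snd x $ i\<bar> \<le> norm x"
        using component_le_norm_cart[of "snd x" i] norm_snd_le[of "snd x" "fst x"] by simp
    qed
    also have "\<dots> \<le> C * norm x" unfolding C_def by (simp add: sum_distrib_left algebra_simps)
    finally show ?thesis .
  qed
  with Cp that show ?thesis by blast
qed

lemma nrm_lo:
  fixes nrm :: "('d::finite) V \<Rightarrow> real"
  assumes "is_norm_fun nrm"
  obtains c where "0 < c" "\<And>x. c * norm x \<le> nrm x"
proof -
  obtain C where C: "0 < C" "\<And>x. nrm x \<le> C * norm x" using nrm_up[OF assms] by blast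
  have "C-lipschitz_on UNIV nrm"
  proof (rule lipschitz_onI)
    fix x y :: "'d V"
    have "nrm x \<le> nrm (x - y) + nrm y" using nrm_basic(2)[OF assms, of "x - y" y] by simp
    moreover have "nrm y \<le> nrm (y - x) + nrm x" using nrm_basic(2)[OF assms, of "y - x" x] by simp
    moreover have "nrm (y - x) = nrm (x - y)" using nrm_basic(5)[OF assms] by simp
    moreover have "nrm (x - y) \<le> C * norm (x - y)" by (rule C(2))
    ultimately show "dist (nrm x) (nrm y) \<le> C * dist x y"
      by (simp add: dist_real_def dist_norm abs_le_iff)
    show "0 \<le> C" using C by simp
  qed
  then have cont: "continuous_on (sphere 0 1) nrm"
    using lipschitz_on_continuous_on continuous_on_subset by blast
  have ne: "sphere (0::'d V) 1 \<noteq> {}"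
  proof -
    have "(1::real, 0::real^'d) \<in> sphere 0 1" by (simp add: norm_Pair)
    then show ?thesis by blast
  qed
  obtain x0 where x0: "x0 \<in> sphere 0 1" "\<And>y. y \<in> sphere 0 1 \<Longrightarrow> nrm x0 \<le> nrm y"
    using continuous_attains_inf[OF compact_sphere ne cont] by blast
  have "x0 \<noteq> 0" using x0(1) by auto
  then have cp: "0 < nrm x0" using nrm_basic(6)[OF assms, of x0] assms unfolding is_norm_fun_def
    by (metis order_le_less)
  have "nrm x0 * norm x \<le> nrm x" for x
  proof (cases "x = 0")
    case True then show ?thesis using nrm_basic(1)[OF assms] by simp
  next
    case False
    then have np: "0 < norm x" by simp
    have "(1 / norm x) *\<^sub>R x \<in> sphere 0 1" using np by (simp add: norm_scaleR)
    then have "nrm x0 \<le> nrm ((1 / norm x) *\<^sub>R x)" by (rule x0(2))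
    also have "\<dots> = nrm x / norm x" using nrm_basic(3)[OF assms] np by simp
    finally show ?thesis using np by (simp add: field_simps)
  qed
  with cp that show ?thesis by blast
qed


lemma sup_inf_le:
  fixes f :: "'a \<Rightarrow> 'b \<Rightarrow> real"
  assumes "A \<noteq> {}" "B \<noteq> {}" "\<And>x y. 0 \<le> f x y" "\<And>y. y \<in> B \<Longrightarrow> \<exists>x\<in>A. f x y \<le> e"
  shows "0 \<le> (SUP y\<in>B. INF x\<in>A. f x y) \<and> (SUP y\<in>B. INF x\<in>A. f x y) \<le> e"
proof -
  have bb: "bdd_below ((\<lambda>x. f x y) ` A)" for y by (rule bdd_belowI2[where m=0]) (use assms(3) in auto)
  have i: "(INF x\<in>A. f x y) \<le> e" if yB: "y \<in> B" for y
  proof -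
    obtain x where "x \<in> A" "f x y \<le> e" using assms(4)[OF yB] by blast
    then show ?thesis using cINF_lower2[OF bb] by blast
  qed
  have i0: "0 \<le> (INF x\<in>A. f x y)" for y by (rule cINF_greatest) (use assms in auto)
  have s1: "(SUP y\<in>B. INF x\<in>A. f x y) \<le> e" by (rule cSUP_least) (use assms(2) i in auto)
  obtain y where y: "y \<in> B" using assms(2) by blast
  have ba: "bdd_above ((\<lambda>y. INF x\<in>A. f x y) ` B)" by (rule bdd_aboveI2[where M=e]) (use i in auto)
  have "0 \<le> (SUP y\<in>B. INF x\<in>A. f x y)" by (rule cSUP_upper2[OF ba y i0])
  with s1 show ?thesis by simp
qed

lemma sup_inf_get:
  fixes f :: "'a \<Rightarrow> 'b \<Rightarrow> real"
  assumes "A \<noteq> {}" "\<And>x y. 0 \<le> f x y" "\<And>x y. x \<in> A \<Longrightarrow> y \<in> B \<Longrightarrow> f x y \<le> M" "y \<in> B"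
    "(SUP y\<in>B. INF x\<in>A. f x y) < e"
  shows "\<exists>x\<in>A. f x y < e"
proof -
  have bb: "bdd_below ((\<lambda>x. f x y) ` A)" for y by (rule bdd_belowI2[where m=0]) (use assms(2) in auto)
  have i: "(INF x\<in>A. f x y) \<le> M" if "y \<in> B" for y
  proof -
    obtain x where "x \<in> A" using assms(1) by blast
    then show ?thesis using cINF_lower2[OF bb] assms(3)[OF _ that] by blast
  qed
  have ba: "bdd_above ((\<lambda>y. INF x\<in>A. f x y) ` B)" by (rule bdd_aboveI2[where M=M]) (use i in auto)
  have "(INF x\<in>A. f x y) \<le> (SUP y\<in>B. INF x\<in>A. f x y)" by (rule cSUP_upper[OF assms(4) ba])
  then have "(INF x\<in>A. f x y) < e" using assms(5) by linarith
  then show ?thesis using cINF_less_iff[OF assms(1) bb] by blast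
qed

lemma unif_conv:
  fixes f :: "nat \<Rightarrow> 'a::real_normed_vector \<Rightarrow> real"
  assumes "compact S" "0 < L"
    "eventually (\<lambda>n. \<forall>x y. \<bar>f n x - f n y\<bar> \<le> L * norm (x - y)) sequentially"
    "\<And>x y. \<bar>g x - g y\<bar> \<le> L * norm (x - y)"
    "\<And>x. (\<lambda>n. f n x) \<longlonglongrightarrow> g x" "0 < e"
  shows "eventually (\<lambda>n. \<forall>x\<in>S. \<bar>f n x - g x\<bar> < e) sequentially"
proof -
  define d where "d = e / (3 * L)"
  have dp: "0 < d" using assms by (simp add: d_def)
  obtain T where T: "T \<subseteq> S" "finite T" "S \<subseteq> (\<Union>t\<in>T. ball t d)"
  proof (rule compactE_image[OF assms(1), of S "\<lambda>t. ball t d"])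
    show "S \<subseteq> (\<Union>t\<in>S. ball t d)" using dp by auto
  qed auto
  have ev1: "eventually (\<lambda>n. \<forall>t\<in>T. \<bar>f n t - g t\<bar> < e / 3) sequentially"
  proof (rule eventually_ball_finite[OF T(2)], intro ballI)
    fix t
    have "eventually (\<lambda>n. dist (f n t) (g t) < e / 3) sequentially"
      by (rule tendstoD[OF assms(5)[of t]]) (use assms(6) in simp)
    then show "eventually (\<lambda>n. \<bar>f n t - g t\<bar> < e / 3) sequentially" by (simp add: dist_real_def)
  qed
  show ?thesis using ev1 assms(3)
  proof eventually_elim
    case (elim n)
    show ?case
    proof
      fix x assume "x \<in> S"
      then obtain t where t: "t \<in> T" "dist t x < d" using T(3) by auto
      have nx: "norm (x - t) < d" using t(2) by (simp add: dist_norm norm_minus_commute)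
      have "\<bar>f n x - g x\<bar> \<le> \<bar>f n x - f n t\<bar> + \<bar>f n t - g t\<bar> + \<bar>g t - g x\<bar>" by linarith
      also have "\<dots> < L * d + e / 3 + L * d"
      proof -
        have "\<bar>f n x - f n t\<bar> \<le> L * norm (x - t)" using elim by blast
        also have "\<dots> \<le> L * d" using nx assms(2) by simp
        finally have a: "\<bar>f n x - f n t\<bar> \<le> L * d" .
        have "\<bar>g t - g x\<bar> \<le> L * norm (t - x)" by (rule assms(4))
        also have "\<dots> \<le> L * d" using nx assms(2) by (simp add: norm_minus_commute)
        finally have b: "\<bar>g t - g x\<bar> \<le> L * d" .
        show ?thesis using a b elim t(1) by fastforce
      qed
      also have "\<dots> = e" using assms(2) by (simp add: d_def field_simps)
      finally show "\<bar>f n x - g x\<bar> < e" .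
    qed
  qed
qed

lemma rescale_S:
  assumes "fnl N m" "0 \<le> fst x" "\<forall>i. 0 \<le> snd x $ i" "0 < N x"
  shows "(1 / N x) *\<^sub>R x \<in> S_plus N"
proof -
  have h: "N (c *\<^sub>R x) = \<bar>c\<bar> * N x" for c using assms(1) unfolding fnl_def by blast
  show ?thesis unfolding S_plus_def using assms(2,3,4) h[of "1 / N x"] by simp
qed

lemma resc_arith:
  fixes t eta a B :: real
  assumes "\<bar>t - 1\<bar> < eta" "eta \<le> 1/2" "0 \<le> a" "a \<le> B"
  shows "\<bar>1 / t - 1\<bar> * a \<le> 2 * eta * B"
proof -
  have tp: "1/2 < t" using assms by linarith
  have "\<bar>1 / t - 1\<bar> = \<bar>1 - t\<bar> / t" using tp by (simp add: field_simps)
  also have "\<dots> \<le> 2 * eta"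
  proof -
    have "\<bar>1 - t\<bar> \<le> eta" using assms(1) by linarith
    also have "eta \<le> 2 * eta * t"
    proof -
      have ep: "0 \<le> eta" using assms(1) by linarith
      have "eta * 1 \<le> eta * (2 * t)" using tp by (intro mult_left_mono ep) simp
      then show ?thesis by simp
    qed
    finally show ?thesis using tp by (simp add: field_simps)
  qed
  finally have c: "\<bar>1 / t - 1\<bar> \<le> 2 * eta" .
  have "\<bar>1 / t - 1\<bar> * a \<le> 2 * eta * a" using c assms(3) by (rule mult_right_mono)
  also have "\<dots> \<le> 2 * eta * B" using assms(1,4) by (intro mult_left_mono) auto
  finally show ?thesis .
qed


lemma fwd:
  fixes Nn :: "nat \<Rightarrow> ('d::finite) V \<Rightarrow> real" and N :: "'d V \<Rightarrow> real" and nrm :: "'d V \<Rightarrow> real"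
  assumes fn: "\<And>n. fnl (Nn n) (mn n)" and f: "fnl N m" and nrm: "is_norm_fun nrm"
    and P: "\<forall>x. (\<lambda>n. Nn n x) \<longlonglongrightarrow> N x"
  shows "(\<lambda>n. hausdorff_dist_norm nrm (S_plus (Nn n)) (S_plus N)) \<longlonglongrightarrow> 0"
proof -
  have mp: "0 < m i" for i using f unfolding fnl_def by blast
  have mnp: "0 < mn n i" for n i using fn[of n] unfolding fnl_def by blast
  have mconv: "(\<lambda>n. mn n i) \<longlonglongrightarrow> m i" for i
    using P[rule_format, of "(0, axis i 1)"] fnl_ax[OF fn, of _ i 1] fnl_ax[OF f, of i 1] by simp
  define K where "K = 1 + (\<Sum>i\<in>UNIV. m i)"
  define L where "L = K + 1"
  have Kconv: "(\<lambda>n. 1 + (\<Sum>i\<in>UNIV. mn n i)) \<longlonglongrightarrow> K"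
    unfolding K_def by (intro tendsto_add tendsto_const tendsto_sum mconv)
  have evK: "eventually (\<lambda>n. 1 + (\<Sum>i\<in>UNIV. mn n i) < L) sequentially"
    using order_tendstoD(2)[OF Kconv, of L] by (simp add: L_def)
  have evm: "eventually (\<lambda>n. \<forall>i. m i / 2 < mn n i) sequentially"
  proof (rule eventually_all_finite)
    fix i show "eventually (\<lambda>n. m i / 2 < mn n i) sequentially"
      using order_tendstoD(1)[OF mconv[of i], of "m i / 2"] mp[of i] by simp
  qed
  define R where "R = 1 + (\<Sum>i\<in>UNIV. 2 / m i)"
  have "0 \<le> (\<Sum>i\<in>UNIV. 2 / m i)" by (rule sum_nonneg) (use mp in \<open>simp add: less_imp_le\<close>)
  then have Rp: "1 \<le> R" unfolding R_def by simp
  have RN: "1 + (\<Sum>i\<in>UNIV. 1 / m i) \<le> R" unfolding R_def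
    using mp by (intro add_left_mono sum_mono) (simp add: divide_right_mono less_imp_le)
  have evR: "eventually (\<lambda>n. 1 + (\<Sum>i\<in>UNIV. 1 / mn n i) \<le> R) sequentially"
    using evm
  proof eventually_elim
    case (elim n)
    show ?case unfolding R_def
    proof (intro add_left_mono sum_mono)
      fix i
      have "m i / 2 < mn n i" using elim by blast
      then show "1 / mn n i \<le> 2 / m i" using mp[of i] by (simp add: field_simps)
    qed
  qed
  have Kp: "0 < K" unfolding K_def using mp by (simp add: add_pos_nonneg sum_nonneg less_imp_le)
  have Lp: "0 < L" using Kp by (simp add: L_def)
  have lipN: "\<bar>N x - N y\<bar> \<le> L * norm (x - y)" for x y
  proof -
    have "\<bar>N x - N y\<bar> \<le> N (x - y)" by (rule fnl_diff[OF f])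
    also have "\<dots> \<le> K * norm (x - y)" using fnl_up[OF f] by (simp add: K_def)
    also have "\<dots> \<le> L * norm (x - y)" by (simp add: L_def mult_right_mono)
    finally show ?thesis .
  qed
  have evlip: "eventually (\<lambda>n. \<forall>x y. \<bar>Nn n x - Nn n y\<bar> \<le> L * norm (x - y)) sequentially"
    using evK
  proof eventually_elim
    case (elim n)
    show ?case
    proof (intro allI)
      fix x y
      have "\<bar>Nn n x - Nn n y\<bar> \<le> Nn n (x - y)" by (rule fnl_diff[OF fn])
      also have "\<dots> \<le> (1 + (\<Sum>i\<in>UNIV. mn n i)) * norm (x - y)" by (rule fnl_up[OF fn])
      also have "\<dots> \<le> L * norm (x - y)" using elim by (intro mult_right_mono) auto
      finally show "\<bar>Nn n x - Nn n y\<bar> \<le> L * norm (x - y)" .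
    qed
  qed
  have unif: "eventually (\<lambda>n. \<forall>x\<in>cball 0 R. \<bar>Nn n x - N x\<bar> < e) sequentially" if "0 < e" for e
    by (rule unif_conv[OF compact_cball Lp evlip lipN]) (use P that in auto)
  obtain C where C: "0 < C" "\<And>x. nrm x \<le> C * norm x" using nrm_up[OF nrm] by blast
  have nn: "0 \<le> nrm x" for x using nrm_basic(6)[OF nrm] .
  show ?thesis
  proof (rule tendstoI)
    fix e :: real assume ep: "0 < e"
    define eta where "eta = min (1/2) (e / (4 * (C * R)))"
    have etap: "0 < eta" unfolding eta_def using ep C(1) Rp by simp
    have eta2: "2 * eta * (C * R) \<le> e / 2"
    proof -
      have "eta \<le> e / (4 * (C * R))" by (simp add: eta_def)
      then have "2 * eta * (C * R) \<le> 2 * (e / (4 * (C * R))) * (C * R)"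
        using C(1) Rp by (intro mult_right_mono) auto
      also have "\<dots> = e / 2" using C(1) Rp by (simp add: field_simps)
      finally show ?thesis .
    qed
    have etah: "eta \<le> 1/2" by (simp add: eta_def)
    show "eventually (\<lambda>n. dist (hausdorff_dist_norm nrm (S_plus (Nn n)) (S_plus N)) 0 < e) sequentially"
      using unif[OF etap] evR
    proof eventually_elim
      case (elim n)
      define A where "A = S_plus (Nn n)"
      define B where "B = S_plus N"
      have Ane: "A \<noteq> {}" using fnl_S_plus_ne[OF fn] A_def by blast
      have Bne: "B \<noteq> {}" using fnl_S_plus_ne[OF f] B_def by blast
      have s1: "\<exists>x\<in>A. nrm (x - y) \<le> e / 2" if yB: "y \<in> B" for y
      proof -
        have y: "0 \<le> fst y" "\<forall>i. 0 \<le> snd y $ i" "N y = 1" using yB by (auto simp: B_def S_plus_def)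
        have ny: "norm y \<le> R" using fnl_S_plus_bdd[OF f, of y] yB RN by (simp add: B_def)
        then have "\<bar>Nn n y - N y\<bar> < eta" using elim by auto
        then have t: "\<bar>Nn n y - 1\<bar> < eta" using y by simp
        then have tp: "0 < Nn n y" using etah by linarith
        define x where "x = (1 / Nn n y) *\<^sub>R y"
        have xA: "x \<in> A" unfolding x_def A_def by (rule rescale_S[OF fn y(1,2) tp])
        have "nrm (x - y) = \<bar>1 / Nn n y - 1\<bar> * nrm y"
          unfolding x_def by (metis nrm_basic(3)[OF nrm] scaleR_collapse scaleR_diff_left scaleR_one)
        also have "\<dots> \<le> 2 * eta * (C * R)"
        proof (rule resc_arith[OF t etah nn])
          show "nrm y \<le> C * R" using C(2)[of y] ny C(1) by (meson mult_left_mono less_imp_le order_trans)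
        qed
        also have "\<dots> \<le> e / 2" by (rule eta2)
        finally show ?thesis using xA by blast
      qed
      have s2: "\<exists>y\<in>B. nrm (x - y) \<le> e / 2" if xA: "x \<in> A" for x
      proof -
        have x: "0 \<le> fst x" "\<forall>i. 0 \<le> snd x $ i" "Nn n x = 1" using xA by (auto simp: A_def S_plus_def)
        have nx: "norm x \<le> R" using fnl_S_plus_bdd[OF fn[of n], of x] xA elim by (simp add: A_def)
        then have "\<bar>Nn n x - N x\<bar> < eta" using elim by auto
        then have t: "\<bar>N x - 1\<bar> < eta" using x by simp
        then have tp: "0 < N x" using etah by linarith
        define y where "y = (1 / N x) *\<^sub>R x"
        have yB: "y \<in> B" unfolding y_def B_def by (rule rescale_S[OF f x(1,2) tp])
        have "nrm (x - y) = nrm (y - x)" by (rule nrm_basic(5)[OF nrm])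
        also have "\<dots> = \<bar>1 / N x - 1\<bar> * nrm x"
          unfolding y_def by (metis nrm_basic(3)[OF nrm] scaleR_collapse scaleR_diff_left scaleR_one)
        also have "\<dots> \<le> 2 * eta * (C * R)"
        proof (rule resc_arith[OF t etah nn])
          show "nrm x \<le> C * R" using C(2)[of x] nx C(1) by (meson mult_left_mono less_imp_le order_trans)
        qed
        also have "\<dots> \<le> e / 2" by (rule eta2)
        finally show ?thesis using yB by blast
      qed
      have h1: "0 \<le> (SUP y\<in>B. INF x\<in>A. nrm (x - y)) \<and> (SUP y\<in>B. INF x\<in>A. nrm (x - y)) \<le> e / 2"
        by (rule sup_inf_le[OF Ane Bne nn s1])
      have h2: "0 \<le> (SUP x\<in>A. INF y\<in>B. nrm (x - y)) \<and> (SUP x\<in>A. INF y\<in>B. nrm (x - y)) \<le> e / 2"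
        by (rule sup_inf_le[OF Bne Ane nn s2])
      have "0 \<le> hausdorff_dist_norm nrm A B \<and> hausdorff_dist_norm nrm A B \<le> e / 2"
        unfolding hausdorff_dist_norm_def using h1 h2 by linarith
      then show ?case using ep by (simp add: A_def B_def dist_real_def)
    qed
  qed
qed


lemma bwd:
  fixes Nn :: "nat \<Rightarrow> ('d::finite) V \<Rightarrow> real" and N :: "'d V \<Rightarrow> real" and nrm :: "'d V \<Rightarrow> real"
  assumes fn: "\<And>n. fnl (Nn n) (mn n)" and f: "fnl N m" and nrm: "is_norm_fun nrm"
    and T: "(\<lambda>n. hausdorff_dist_norm nrm (S_plus (Nn n)) (S_plus N)) \<longlonglongrightarrow> 0"
  shows "(\<lambda>n. Nn n x) \<longlonglongrightarrow> N x"
proof -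
  have mp: "0 < m i" for i using f unfolding fnl_def by blast
  have mnp: "0 < mn n i" for n i using fn[of n] unfolding fnl_def by blast
  obtain c where c: "0 < c" "\<And>x. c * norm x \<le> nrm x" using nrm_lo[OF nrm] by blast
  obtain C where C: "0 < C" "\<And>x. nrm x \<le> C * norm x" using nrm_up[OF nrm] by blast
  have nn: "0 \<le> nrm x" for x using nrm_basic(6)[OF nrm] .
  define H where "H n = hausdorff_dist_norm nrm (S_plus (Nn n)) (S_plus N)" for n
  have G: "\<exists>x\<in>S_plus (Nn n). norm (x - y) < e / c" if y: "y \<in> S_plus N" and He: "H n < e" for n y e
  proof -
    have Ane: "S_plus (Nn n) \<noteq> {}" using fnl_S_plus_ne[OF fn] by blast
    have bd: "nrm (x - y) \<le> C * ((1 + (\<Sum>i\<in>UNIV. 1 / mn n i)) + (1 + (\<Sum>i\<in>UNIV. 1 / m i)))"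
      if "x \<in> S_plus (Nn n)" "y \<in> S_plus N" for x y
    proof -
      have "nrm (x - y) \<le> C * norm (x - y)" by (rule C(2))
      also have "\<dots> \<le> C * (norm x + norm y)" using C(1) by (intro mult_left_mono norm_triangle_ineq4) auto
      also have "\<dots> \<le> C * ((1 + (\<Sum>i\<in>UNIV. 1 / mn n i)) + (1 + (\<Sum>i\<in>UNIV. 1 / m i)))"
        using C(1) fnl_S_plus_bdd[OF fn[of n] that(1)] fnl_S_plus_bdd[OF f that(2)]
        by (intro mult_left_mono add_mono) auto
      finally show ?thesis .
    qed
    have "(SUP y\<in>S_plus N. INF x\<in>S_plus (Nn n). nrm (x - y)) \<le> H n"
      unfolding H_def hausdorff_dist_norm_def by simp
    then have "(SUP y\<in>S_plus N. INF x\<in>S_plus (Nn n). nrm (x - y)) < e" using He by linarith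
    then obtain x where x: "x \<in> S_plus (Nn n)" "nrm (x - y) < e"
      using sup_inf_get[where f="\<lambda>x y. nrm (x - y)" and A="S_plus (Nn n)" and B="S_plus N", OF Ane nn bd y] by blast
    have "c * norm (x - y) < e" using c(2)[of "x - y"] x(2) by linarith
    then have "norm (x - y) < e / c" using c(1) by (simp add: field_simps)
    then show ?thesis using x(1) by blast
  qed
  have T': "H \<longlonglongrightarrow> 0" using T by (simp add: H_def[abs_def])
  have evH: "eventually (\<lambda>n. H n < e) sequentially" if "0 < e" for e
    using order_tendstoD(2)[OF T' that] .
  have evm: "eventually (\<lambda>n. \<forall>i. mn n i \<le> 2 * m i) sequentially"
  proof (rule eventually_all_finite)
    fix i
    define p where "p = ((0::real), axis i (1 / m i))"
    have pS: "p \<in> S_plus N" using fnl_ax[OF f, of i "1 / m i"] mp[of i]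
      by (simp add: p_def S_plus_def axis_def)
    have "0 < c / (2 * m i)" using c(1) mp[of i] by simp
    from evH[OF this] show "eventually (\<lambda>n. mn n i \<le> 2 * m i) sequentially"
    proof eventually_elim
      case (elim n)
      obtain x where x: "x \<in> S_plus (Nn n)" "norm (x - p) < c / (2 * m i) / c"
        using G[OF pS elim] by blast
      have "\<bar>(snd (x - p)) $ i\<bar> \<le> norm (x - p)"
        using component_le_norm_cart[of "snd (x - p)" i] norm_snd_le[of "snd (x - p)" "fst (x - p)"]
        by (metis order_trans prod.collapse)
      also have "\<dots> < 1 / (2 * m i)" using x(2) c(1) by simp
      finally have "\<bar>snd x $ i - 1 / m i\<bar> < 1 / (2 * m i)" by (simp add: p_def)
      then have "1 / m i - 1 / (2 * m i) < snd x $ i" by (simp add: abs_less_iff)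
      moreover have "1 / m i - 1 / (2 * m i) = 1 / (2 * m i)" using mp[of i] by (simp add: field_simps)
      ultimately have xi: "1 / (2 * m i) < snd x $ i" by simp
      have "\<bar>snd x $ i\<bar> * mn n i \<le> Nn n x" using fn[of n] unfolding fnl_def by blast
      also have "\<dots> = 1" using x(1) by (simp add: S_plus_def)
      finally have "(1 / (2 * m i)) * mn n i \<le> 1"
        using xi mnp[of n i] by (smt (verit) mult_right_mono)
      then show ?case using mp[of i] by (simp add: field_simps)
    qed
  qed
  define K2 where "K2 = 1 + (\<Sum>i\<in>UNIV. 2 * m i)"
  have K2p: "0 < K2" unfolding K2_def using mp by (simp add: add_pos_nonneg sum_nonneg less_imp_le)
  have evK: "eventually (\<lambda>n. 1 + (\<Sum>i\<in>UNIV. mn n i) \<le> K2) sequentially"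
    using evm by eventually_elim (auto simp: K2_def intro!: sum_mono)
  define a where "a = avec x"
  have ax: "Nn n x = Nn n a" for n using fn[of n] unfolding fnl_def a_def by metis
  have ax2: "N x = N a" using f unfolding fnl_def a_def by metis
  have a_nn: "0 \<le> fst a" "\<forall>i. 0 \<le> snd a $ i" by (simp_all add: a_def avec_def)
  show ?thesis
  proof (cases "N a = 0")
    case True
    have "snd a $ i = 0" for i
    proof -
      have "\<bar>snd a $ i\<bar> * m i \<le> N a" using f unfolding fnl_def by blast
      then show ?thesis using True mp[of i] a_nn(2)
        by (metis abs_of_nonneg mult_le_0_iff not_le order_antisym)
    qed
    moreover have "fst a = 0" using True f a_nn unfolding fnl_def by (metis abs_of_nonneg order_antisym)
    ultimately have "Nn n a = 0" for n
      using fn[of n] fnl_nonneg[OF fn[of n], of a] unfolding fnl_def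
      by (metis (no_types, lifting) abs_zero add.right_neutral mult_zero_left order_antisym sum.neutral)
    then show ?thesis using True by (simp add: ax ax2)
  next
    case False
    then have Nap: "0 < N a" using fnl_nonneg[OF f, of a] by simp
    define s where "s = (1 / N a) *\<^sub>R a"
    have sS: "s \<in> S_plus N" unfolding s_def by (rule rescale_S[OF f a_nn Nap])
    have conv1: "(\<lambda>n. Nn n s) \<longlonglongrightarrow> 1"
    proof (rule tendstoI)
      fix e :: real assume ep: "0 < e"
      have "0 < c * e / K2" using c(1) ep K2p by simp
      from eventually_conj[OF evH[OF this] evK]
      show "eventually (\<lambda>n. dist (Nn n s) 1 < e) sequentially"
      proof eventually_elim
        case (elim n)
        obtain y where y: "y \<in> S_plus (Nn n)" "norm (y - s) < c * e / K2 / c"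
          using G[OF sS] elim by blast
        have ny: "Nn n y = 1" using y(1) by (simp add: S_plus_def)
        have "\<bar>Nn n s - Nn n y\<bar> \<le> Nn n (s - y)" by (rule fnl_diff[OF fn])
        also have "\<dots> \<le> (1 + (\<Sum>i\<in>UNIV. mn n i)) * norm (s - y)" by (rule fnl_up[OF fn])
        also have "\<dots> \<le> K2 * norm (s - y)" using elim by (intro mult_right_mono) auto
        also have "\<dots> < K2 * (e / K2)"
          using y(2) c(1) K2p by (intro mult_strict_left_mono) (auto simp: norm_minus_commute)
        also have "\<dots> = e" using K2p by simp
        finally show ?case using ny by (simp add: dist_real_def)
      qed
    qed
    have "Nn n a = N a * Nn n s" for n
    proof -
      have "a = N a *\<^sub>R s" using Nap by (simp add: s_def)
      then have "Nn n a = Nn n (N a *\<^sub>R s)" by simp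
      also have "\<dots> = \<bar>N a\<bar> * Nn n s" using fn[of n] unfolding fnl_def by blast
      also have "\<dots> = N a * Nn n s" using Nap by simp
      finally show ?thesis .
    qed
    moreover have "(\<lambda>n. N a * Nn n s) \<longlonglongrightarrow> N a * 1" by (intro tendsto_mult tendsto_const conv1)
    ultimately show ?thesis by (simp add: ax ax2)
  qed
qed

theorem theorem6p4:
  fixes Nn :: "nat \<Rightarrow> real \<times> (real ^ 'd) \<Rightarrow> real"
    and N :: "real \<times> (real ^ 'd) \<Rightarrow> real"
    and nrm :: "real \<times> (real ^ 'd) \<Rightarrow> real"
  assumes "\<And>n. is_F_norm (Nn n)"
    and "is_F_norm N"
    and "is_norm_fun nrm"
  shows "(\<forall>x. (\<lambda>n. Nn n x) \<longlonglongrightarrow> N x) \<longleftrightarrow>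
         (\<lambda>n. hausdorff_dist_norm nrm (S_plus (Nn n)) (S_plus N)) \<longlonglongrightarrow> 0"
proof -
  have "\<exists>m. fnl (Nn n) m" for n
  proof -
    obtain F where "cond_H F" "Nn n = F_norm_of F" using assms(1)[of n] unfolding is_F_norm_def by blast
    then show ?thesis using F_norm_fnl by metis
  qed
  then obtain mn where fn: "\<And>n. fnl (Nn n) (mn n)" by metis
  obtain F where "cond_H F" "N = F_norm_of F" using assms(2) unfolding is_F_norm_def by blast
  then obtain m where f: "fnl N m" using F_norm_fnl by metis
  show ?thesis using fwd[where Nn=Nn and mn=mn, OF fn f assms(3)] bwd[where Nn=Nn and mn=mn, OF fn f assms(3)] by blast
qed

end
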